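(* In the setting described in the context, let $\rho:\mathbb{R}^n\to[0,\infty)$ be continuous and $\phi:[0,\infty)\to[0,\infty)$ be continuous and nondecreasing, and suppose that (in addition to the bounds on $\alpha$) $\alpha(x)=\phi(\rho(x))$ for all $x\in\mathbb{R}^n$. Assume further that there exists a nondecreasing function $\Gamma:[0,\infty)\to[0,\infty)$ such that $\inf_{u\in U}\rho(f(x,u))=\Gamma(\rho(x))$ for all $x\in\mathbb{R}^n$. Then $\inf_{u\in U}\mathcal{V}(\{f(x,u)\})<\mathcal{V}(\{x\})$ and $\inf_{u\in U}\mathcal{W}(\{f(x,u)\})<\mathcal{W}(\{x\})$ for all $x\in\mathcal{D}_{\mathcal{A}}\setminus\mathcal{A}$.
   Context: Let $\|\cdot\|$ be a norm on $\mathbb{R}^n$ and $\mathrm{dist}(x,\Omega):=\inf_{y\in\Omega}\|x-y\|$. Let $\mathcal{K}(\mathbb{R}^n)$ denote the nonempty compact subsets of $\mathbb{R}^n$. Consider $x_{k+1}=f(x_k,u_k)$ with $f:\mathbb{R}^n\times\mathbb{R}^m\to\mathbb{R}^n$ continuous and inputs $u_k\in U$, $U\subset\mathbb{R}^m$ nonempty compact. For $x\in\mathbb{R}^n$ and $\pi:\mathbb{Z}_+\to U$, $\varphi_x^\pi(0)=x$, $\varphi_x^\pi(k+1)=f(\varphi_x^\pi(k),\pi(k))$; $\mathcal{R}(X,k):=\{\varphi_x^\pi(k):x\in X,\pi\in U^{\mathbb{Z}_+}\}$. Let $\mathcal{A}\in\mathcal{K}(\mathbb{R}^n)$ be controlled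 invariant. Assume local $\ell_p$-stabilizability: there exist $r>0$, $M\ge1$, $p>0$, $\lambda:[0,r]\times\mathbb{Z}_+\to\mathbb{R}_+$ such that (1) for each $k$, $s\mapsto\lambda(s,k)$ is continuous, nondecreasing, $\lambda(0,k)=0$; for each $s$, $k\mapsto\lambda(s,k)$ is nonincreasing, $\lambda(s,0)\le s$; (2) $\sum_{k}\lambda(r,k)^p<\infty$; (3) for every $x$ with $\mathrm{dist}(x,\mathcal{A})\le r$ there is $\pi\in U^{\mathbb{Z}_+}$ with $\mathrm{dist}(\varphi_x^\pi(k),\mathcal{A})\le M\lambda(\mathrm{dist}(x,\mathcal{A}),k)$ for all $k$. Let $\mathcal{D}_{\mathcal{A}}:=\{x:\exists\pi\in U^{\mathbb{Z}_+},\ \lim_{k\to\infty}\mathrm{dist}(\varphi_x^\pi(k),\mathcal{A})=0\}$. Let $\alpha:\mathbb{R}^n\to\mathbb{R}_+$ be continuous with $\underline{\alpha}\,\mathrm{dist}(x,\mathcal{A})^{\bar p}\le\alpha(x)\le\overline{\alpha}\,\mathrm{dist}(x,\mathcal{A})^{\bar p}$, constants $\underline{\alpha},\overline{\alpha}>0$, $\bar p\ge p$. Define $\Psi(X):=\inf_{y\in X}\alpha(y)$, $\mathcal{V}(X):=\sum_{k=0}^\infty\Psi(\mathcal{R}(X,k))\in[0,\infty]$, and $\mathcal{W}(X):=1-\exp(-\mathcal{V}(X))$ with the convention $\exp(-\infty)=0$. *)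

theory Defs
  imports "HOL-Analysis.Analysis"
begin

text \<open>An arbitrary norm on a real vector space (the paper's norm on R^n need not be Euclidean).\<close>
definition is_norm :: "('a::real_vector \<Rightarrow> real) \<Rightarrow> bool" where
  "is_norm N \<longleftrightarrow> (\<forall>x. N x = 0 \<longrightarrow> x = 0) \<and> (\<forall>x y. N (x + y) \<le> N x + N y)
      \<and> (\<forall>c x. N (scaleR c x) = \<bar>c\<bar> * N x)"

definition setdist :: "('a::real_vector \<Rightarrow> real) \<Rightarrow> 'a \<Rightarrow> 'a set \<Rightarrow> real" where
  "setdist N x \<Omega> = (INF y\<in>\<Omega>. N (x - y))"

primrec traj :: "('x \<Rightarrow> 'u \<Rightarrow> 'x) \<Rightarrow> 'x \<Rightarrow> (nat \<Rightarrow> 'u) \<Rightarrow> nat \<Rightarrow> 'x" where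
  "traj f x \<pi> 0 = x"
| "traj f x \<pi> (Suc k) = f (traj f x \<pi> k) (\<pi> k)"

definition reach :: "('x \<Rightarrow> 'u \<Rightarrow> 'x) \<Rightarrow> 'u set \<Rightarrow> 'x set \<Rightarrow> nat \<Rightarrow> 'x set" where
  "reach f U X k = {traj f x \<pi> k | x \<pi>. x \<in> X \<and> (\<forall>j. \<pi> j \<in> U)}"

definition controlled_invariant :: "('x \<Rightarrow> 'u \<Rightarrow> 'x) \<Rightarrow> 'u set \<Rightarrow> 'x set \<Rightarrow> bool" where
  "controlled_invariant f U A \<longleftrightarrow> (\<forall>x\<in>A. \<exists>u\<in>U. f x u \<in> A)"

definition domA :: "('a::real_vector \<Rightarrow> real) \<Rightarrow> ('a \<Rightarrow> 'u \<Rightarrow> 'a) \<Rightarrow> 'u set \<Rightarrow> 'a set \<Rightarrow> 'a set" where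
  "domA N f U A = {x. \<exists>\<pi>. (\<forall>j. \<pi> j \<in> U) \<and> (\<lambda>k. setdist N (traj f x \<pi> k) A) \<longlonglongrightarrow> 0}"

definition Psi :: "('x \<Rightarrow> real) \<Rightarrow> 'x set \<Rightarrow> real" where
  "Psi \<alpha> X = (INF y\<in>X. \<alpha> y)"

definition Vfun :: "('x \<Rightarrow> real) \<Rightarrow> ('x \<Rightarrow> 'u \<Rightarrow> 'x) \<Rightarrow> 'u set \<Rightarrow> 'x set \<Rightarrow> ennreal" where
  "Vfun \<alpha> f U X = (\<Sum>k. ennreal (Psi \<alpha> (reach f U X k)))"

definition Wfun :: "('x \<Rightarrow> real) \<Rightarrow> ('x \<Rightarrow> 'u \<Rightarrow> 'x) \<Rightarrow> 'u set \<Rightarrow> 'x set \<Rightarrow> real" where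
  "Wfun \<alpha> f U X = (if Vfun \<alpha> f U X = \<infinity> then 1 else 1 - exp (- enn2real (Vfun \<alpha> f U X)))"

end

theory Submission
  imports Defs "HOL-Analysis.Analysis"
begin



lemma norm_basic:
  assumes "is_norm N"
  shows "N 0 = 0" "N v \<ge> 0" "N (- v) = N v"
proof -
  have h: "\<And>c x. N (scaleR c x) = \<bar>c\<bar> * N x" and t: "\<And>x y. N (x + y) \<le> N x + N y"
    using assms unfolding is_norm_def by auto
  show z: "N 0 = 0" using h[of 0 0] by simp
  show "N (- v) = N v" using h[of "-1" v] by simp
  have "N (v + - v) \<le> N v + N (- v)" by (rule t)
  then show "N v \<ge> 0" using z h[of "-1" v] by simp
qed

lemma norm_sum_le:
  assumes "is_norm N" "finite S"
  shows "N (sum g S) \<le> (\<Sum>b\<in>S. N (g b))"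
  using assms(2)
proof (induction S rule: finite_induct)
  case empty then show ?case using norm_basic[OF assms(1)] by simp
next
  case (insert a S)
  have "N (g a + sum g S) \<le> N (g a) + N (sum g S)" using assms(1) unfolding is_norm_def by blast
  then show ?case using insert by simp
qed

lemma norm_bound:
  fixes N :: "'a::euclidean_space \<Rightarrow> real"
  assumes "is_norm N"
  shows "N v \<le> (\<Sum>b\<in>Basis. N b) * norm v"
proof -
  have h: "\<And>c x. N (scaleR c x) = \<bar>c\<bar> * N x" using assms unfolding is_norm_def by auto
  have "N v = N (\<Sum>b\<in>Basis. (v \<bullet> b) *\<^sub>R b)" by (simp add: euclidean_representation)
  also have "\<dots> \<le> (\<Sum>b\<in>Basis. N ((v \<bullet> b) *\<^sub>R b))" by (rule norm_sum_le[OF assms]) simp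
  also have "\<dots> = (\<Sum>b\<in>Basis. \<bar>v \<bullet> b\<bar> * N b)" using h by simp
  also have "\<dots> \<le> (\<Sum>b\<in>Basis. norm v * N b)"
    by (rule sum_mono) (simp add: Basis_le_norm mult_right_mono norm_basic[OF assms])
  finally show ?thesis by (simp add: sum_distrib_left mult.commute)
qed

lemma norm_cont:
  fixes N :: "'a::euclidean_space \<Rightarrow> real"
  assumes "is_norm N"
  shows "continuous_on S N"
proof -
  let ?C = "\<Sum>b\<in>Basis. N b"
  have t: "\<And>x y. N (x + y) \<le> N x + N y" using assms unfolding is_norm_def by auto
  have "?C-lipschitz_on S N"
  proof (rule lipschitz_onI)
    fix x y :: 'a
    have "N x \<le> N y + N (x - y)" using t[of y "x - y"] by simp
    moreover have "N y \<le> N x + N (y - x)" using t[of x "y - x"] by simp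
    moreover have "N (y - x) = N (x - y)" using norm_basic(3)[OF assms, of "x - y"] by simp
    moreover have "N (x - y) \<le> ?C * norm (x - y)" by (rule norm_bound[OF assms])
    ultimately show "dist (N x) (N y) \<le> ?C * dist x y"
      by (simp add: dist_real_def dist_norm abs_le_iff)
  next
    show "0 \<le> ?C" by (rule sum_nonneg) (simp add: norm_basic[OF assms])
  qed
  then show ?thesis by (rule lipschitz_on_continuous_on)
qed

lemma setdist_nonneg:
  assumes "is_norm N" "A \<noteq> {}"
  shows "setdist N x A \<ge> 0"
  unfolding setdist_def using assms by (auto intro: cINF_greatest simp: norm_basic)

lemma setdist_pos:
  fixes N :: "'a::euclidean_space \<Rightarrow> real"
  assumes "is_norm N" "compact A" "A \<noteq> {}" "x \<notin> A"
  shows "setdist N x A > 0"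
proof -
  have "continuous_on A (\<lambda>y. N (x - y))"
    by (rule continuous_on_compose2[OF norm_cont[OF assms(1)]]) (auto intro!: continuous_intros)
  then obtain y0 where y0: "y0 \<in> A" "\<And>y. y \<in> A \<Longrightarrow> N (x - y0) \<le> N (x - y)"
    using continuous_attains_inf[OF assms(2,3)] by blast
  have "setdist N x A \<ge> N (x - y0)" unfolding setdist_def
    by (rule cINF_greatest) (use assms y0 in auto)
  moreover have "N (x - y0) \<noteq> 0" using assms(1,4) y0(1) unfolding is_norm_def by force
  moreover have "N (x - y0) \<ge> 0" by (rule norm_basic(2)[OF assms(1)])
  ultimately show ?thesis by linarith
qed

lemma min_attained:
  fixes g :: "'a::topological_space \<Rightarrow> real"
  assumes "compact S" "S \<noteq> {}" "continuous_on S g"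
  shows "\<exists>z0\<in>S. (INF z\<in>S. g z) = g z0 \<and> (\<forall>z\<in>S. g z0 \<le> g z)"
proof -
  obtain z0 where z0: "z0 \<in> S" "\<forall>z\<in>S. g z0 \<le> g z" using continuous_attains_inf[OF assms] by blast
  have "(INF z\<in>S. g z) = g z0"
  proof (rule antisym)
    show "(INF z\<in>S. g z) \<le> g z0" by (rule cINF_lower) (use z0 in \<open>auto intro: bdd_belowI2\<close>)
    show "g z0 \<le> (INF z\<in>S. g z)" by (rule cINF_greatest) (use z0 assms in auto)
  qed
  then show ?thesis using z0 by blast
qed

lemma traj_cong: "(\<And>j. j < k \<Longrightarrow> \<pi> j = \<pi>' j) \<Longrightarrow> traj f x \<pi> k = traj f x \<pi>' k"
  by (induction k) auto

lemma traj_append: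
  "traj f x (\<lambda>j. if j < K then \<pi> j else \<pi>2 (j - K)) (K + k) = traj f (traj f x \<pi> K) \<pi>2 k"
proof (induction k)
  case 0 then show ?case by (auto intro: traj_cong)
next
  case (Suc k) then show ?case by simp
qed

lemma reach_0: "U \<noteq> {} \<Longrightarrow> reach f U {x} 0 = {x}"
  unfolding reach_def by (auto intro!: exI[of _ "\<lambda>_. SOME u. u \<in> U"] some_in_eq[THEN iffD2])

lemma reach_Suc: "reach f U X (Suc k) = (\<lambda>(z, u). f z u) ` (reach f U X k \<times> U)"
proof
  show "reach f U X (Suc k) \<subseteq> (\<lambda>(z, u). f z u) ` (reach f U X k \<times> U)"
    unfolding reach_def by (auto intro!: image_eqI)
next
  show "(\<lambda>(z, u). f z u) ` (reach f U X k \<times> U) \<subseteq> reach f U X (Suc k)"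
  proof clarify
    fix z u assume "z \<in> reach f U X k" "u \<in> U"
    then obtain x \<pi> where x: "z = traj f x \<pi> k" "x \<in> X" "\<forall>j. \<pi> j \<in> U" unfolding reach_def by blast
    have "traj f x (\<pi>(k := u)) k = z" using x by (auto intro: traj_cong)
    then have "f z u = traj f x (\<pi>(k := u)) (Suc k)" by simp
    moreover have "\<forall>j. (\<pi>(k := u)) j \<in> U" using x \<open>u \<in> U\<close> by simp
    ultimately show "f z u \<in> reach f U X (Suc k)" unfolding reach_def using x(2) by blast
  qed
qed

lemma reach_compact:
  assumes "continuous_on UNIV (\<lambda>(x, u). f x u)" "compact U" "U \<noteq> {}"
  shows "compact (reach f U {x} k) \<and> reach f U {x} k \<noteq> {}"
proof (induction k)
  case 0 then show ?case using reach_0[OF assms(3), of f x] by simp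
next
  case (Suc k)
  have "compact ((\<lambda>(z, u). f z u) ` (reach f U {x} k \<times> U))"
    by (rule compact_continuous_image[OF continuous_on_subset[OF assms(1)]]) (use Suc assms in \<open>auto intro: compact_Times\<close>)
  then show ?case using Suc assms(3) by (simp add: reach_Suc)
qed

theorem theorem15:
  fixes N :: "real^'n \<Rightarrow> real"
    and f :: "real^'n \<Rightarrow> real^'m \<Rightarrow> real^'n"
    and U :: "(real^'m) set"
    and A :: "(real^'n) set"
    and r M p :: real
    and lam :: "real \<Rightarrow> nat \<Rightarrow> real"
    and \<alpha> :: "real^'n \<Rightarrow> real"
    and \<alpha>lo \<alpha>hi pbar :: real
    and \<rho> :: "real^'n \<Rightarrow> real"
    and \<phi> :: "real \<Rightarrow> real"
    and \<Gamma> :: "real \<Rightarrow> real"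
  assumes norm: "is_norm N"
    and f_cont: "continuous_on UNIV (\<lambda>(x, u). f x u)"
    and U_compact: "compact U" and U_ne: "U \<noteq> {}"
    and A_compact: "compact A" and A_ne: "A \<noteq> {}"
    and A_inv: "controlled_invariant f U A"
    and r_pos: "r > 0" and M_ge: "M \<ge> 1" and p_pos: "p > 0"
    and lam_nonneg: "\<And>s k. s \<in> {0..r} \<Longrightarrow> lam s k \<ge> 0"
    and lam_cont: "\<And>k. continuous_on {0..r} (\<lambda>s. lam s k)"
    and lam_mono: "\<And>k. mono_on {0..r} (\<lambda>s. lam s k)"
    and lam_zero: "\<And>k. lam 0 k = 0"
    and lam_anti: "\<And>s k k'. s \<in> {0..r} \<Longrightarrow> k \<le> k' \<Longrightarrow> lam s k' \<le> lam s k"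
    and lam_init: "\<And>s. s \<in> {0..r} \<Longrightarrow> lam s 0 \<le> s"
    and lam_sum: "summable (\<lambda>k. lam r k powr p)"
    and stab: "\<And>x. setdist N x A \<le> r \<Longrightarrow>
        \<exists>\<pi>. (\<forall>j. \<pi> j \<in> U) \<and> (\<forall>k. setdist N (traj f x \<pi> k) A \<le> M * lam (setdist N x A) k)"
    and \<alpha>_cont: "continuous_on UNIV \<alpha>"
    and \<alpha>_nonneg: "\<And>x. \<alpha> x \<ge> 0"
    and \<alpha>lo_pos: "\<alpha>lo > 0" and \<alpha>hi_pos: "\<alpha>hi > 0" and pbar_ge: "pbar \<ge> p"
    and \<alpha>_lower: "\<And>x. \<alpha>lo * setdist N x A powr pbar \<le> \<alpha> x"
    and \<alpha>_upper: "\<And>x. \<alpha> x \<le> \<alpha>hi * setdist N x A powr pbar"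
    and \<rho>_cont: "continuous_on UNIV \<rho>"
    and \<rho>_nonneg: "\<And>x. \<rho> x \<ge> 0"
    and \<phi>_cont: "continuous_on {0..} \<phi>"
    and \<phi>_mono: "mono_on {0..} \<phi>"
    and \<phi>_nonneg: "\<And>t. t \<ge> 0 \<Longrightarrow> \<phi> t \<ge> 0"
    and \<alpha>_eq: "\<And>x. \<alpha> x = \<phi> (\<rho> x)"
    and \<Gamma>_mono: "mono_on {0..} \<Gamma>"
    and \<Gamma>_nonneg: "\<And>t. t \<ge> 0 \<Longrightarrow> \<Gamma> t \<ge> 0"
    and \<Gamma>_eq: "\<And>x. (INF u\<in>U. \<rho> (f x u)) = \<Gamma> (\<rho> x)"
  shows "\<forall>x \<in> domA N f U A - A.
           (INF u\<in>U. Vfun \<alpha> f U {f x u}) < Vfun \<alpha> f U {x}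
         \<and> (INF u\<in>U. Wfun \<alpha> f U {f x u}) < Wfun \<alpha> f U {x}"
  proof
  fix x assume xD: "x \<in> domA N f U A - A"
  have fc: "\<And>y. continuous_on UNIV (\<lambda>u. f y u)"
  proof -
    fix y
    have "continuous_on UNIV ((\<lambda>(x, u). f x u) \<circ> (\<lambda>u. (y, u)))"
      by (rule continuous_on_compose) (auto intro!: continuous_intros continuous_on_subset[OF f_cont])
    then show "continuous_on UNIV (\<lambda>u. f y u)" by (simp add: o_def)
  qed
  have RC: "\<And>y k. compact (reach f U {y} k) \<and> reach f U {y} k \<noteq> {}"
    using reach_compact[OF f_cont U_compact U_ne] by blast
  have rhoR: "\<And>S. compact S \<Longrightarrow> S \<noteq> {} \<Longrightarrow> \<exists>z0\<in>S. (INF z\<in>S. \<rho> z) = \<rho> z0 \<and> (\<forall>z\<in>S. \<rho> z0 \<le> \<rho> z)"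
    by (rule min_attained) (auto intro: continuous_on_subset[OF \<rho>_cont])
  have mk: "(INF z\<in>reach f U {y} k. \<rho> z) = (\<Gamma> ^^ k) (\<rho> y)" for y k
  proof (induction k)
    case 0 
    have "reach f U {y} 0 = {y}" by (rule reach_0[OF U_ne])
    then show ?case by simp
  next
    case (Suc k)
    obtain w where w: "w \<in> reach f U {y} (Suc k)" "(INF z\<in>reach f U {y} (Suc k). \<rho> z) = \<rho> w"
      "\<forall>z\<in>reach f U {y} (Suc k). \<rho> w \<le> \<rho> z" using rhoR[OF conjunct1[OF RC] conjunct2[OF RC]] by blast
    obtain z0 where z0: "z0 \<in> reach f U {y} k" "(INF z\<in>reach f U {y} k. \<rho> z) = \<rho> z0"
      "\<forall>z\<in>reach f U {y} k. \<rho> z0 \<le> \<rho> z" using rhoR[OF conjunct1[OF RC] conjunct2[OF RC]] by blast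
    have "\<rho> w \<le> \<Gamma> (\<rho> z0)"
    proof -
      have "\<rho> w \<le> (INF u\<in>U. \<rho> (f z0 u))"
      proof (rule cINF_greatest[OF U_ne])
        fix u assume "u \<in> U"
        then have "f z0 u \<in> reach f U {y} (Suc k)" using z0(1) by (auto simp: reach_Suc)
        then show "\<rho> w \<le> \<rho> (f z0 u)" using w(3) by blast
      qed
      then show ?thesis using \<Gamma>_eq by simp
    qed
    moreover have "\<Gamma> (\<rho> z0) \<le> \<rho> w"
    proof -
      obtain z u where zu: "z \<in> reach f U {y} k" "u \<in> U" "w = f z u" using w(1) by (auto simp: reach_Suc)
      have "\<Gamma> (\<rho> z0) \<le> \<Gamma> (\<rho> z)"
        using z0(3) zu(1) \<rho>_nonneg by (intro mono_onD[OF \<Gamma>_mono]) auto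
      also have "\<dots> = (INF u\<in>U. \<rho> (f z u))" using \<Gamma>_eq by simp
      also have "\<dots> \<le> \<rho> (f z u)"
        by (rule cINF_lower[OF bdd_belowI2[where m=0] zu(2)]) (rule \<rho>_nonneg)
      finally show ?thesis using zu by simp
    qed
    ultimately have "\<rho> w = \<Gamma> (\<rho> z0)" by linarith
    then have "(INF z\<in>reach f U {y} (Suc k). \<rho> z) = \<Gamma> ((\<Gamma> ^^ k) (\<rho> y))"
      using w(2) z0(2) Suc.IH by (simp only:)
    then show ?case by simp
  qed
  have PsiR: "Psi \<alpha> (reach f U {y} k) = \<phi> ((\<Gamma> ^^ k) (\<rho> y))" for y k
  proof -
    obtain z0 where z0: "z0 \<in> reach f U {y} k" "(INF z\<in>reach f U {y} k. \<rho> z) = \<rho> z0"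
      "\<forall>z\<in>reach f U {y} k. \<rho> z0 \<le> \<rho> z" using rhoR[OF conjunct1[OF RC] conjunct2[OF RC]] by blast
    have "Psi \<alpha> (reach f U {y} k) = \<phi> (\<rho> z0)"
      unfolding Psi_def
    proof (rule antisym)
      have bb: "bdd_below (\<alpha> ` reach f U {y} k)" using \<alpha>_nonneg by (intro bdd_belowI2) 
      show "(INF z\<in>reach f U {y} k. \<alpha> z) \<le> \<phi> (\<rho> z0)"
        using cINF_lower[OF bb z0(1)] \<alpha>_eq[of z0] by simp
      show "\<phi> (\<rho> z0) \<le> (INF z\<in>reach f U {y} k. \<alpha> z)"
      proof (rule cINF_greatest)
        show "reach f U {y} k \<noteq> {}" using RC by blast
        fix z assume "z \<in> reach f U {y} k"
        then have "\<rho> z0 \<le> \<rho> z" using z0(3) by blast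
        then have "\<phi> (\<rho> z0) \<le> \<phi> (\<rho> z)" 
          by (intro mono_onD[OF \<phi>_mono]) (use \<rho>_nonneg in auto)
        then show "\<phi> (\<rho> z0) \<le> \<alpha> z" using \<alpha>_eq[of z] by simp
      qed
    qed
    then show ?thesis using z0(2) mk[of y k] by (simp only:)
  qed
  have Psi_nonneg: "Psi \<alpha> (reach f U {y} k) \<ge> 0" for y k
    unfolding Psi_def by (rule cINF_greatest) (use RC \<alpha>_nonneg in auto)
  obtain us where us: "us \<in> U" "(INF u\<in>U. \<rho> (f x u)) = \<rho> (f x us)"
    using min_attained[OF U_compact U_ne continuous_on_subset[OF continuous_on_compose2[OF \<rho>_cont fc]]]
    by auto
  have shift: "Psi \<alpha> (reach f U {f x us} k) = Psi \<alpha> (reach f U {x} (Suc k))" for k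
    using PsiR us(2) \<Gamma>_eq[of x] by (simp add: funpow_Suc_right del: funpow.simps)
  define a where "a k = Psi \<alpha> (reach f U {x} k)" for k
  have a0: "a 0 = \<alpha> x" unfolding a_def Psi_def using reach_0[OF U_ne, of f x] by simp
  have apos: "a 0 > 0"
  proof -
    have "setdist N x A > 0" using setdist_pos[OF norm A_compact A_ne] xD by blast
    then have "\<alpha>lo * setdist N x A powr pbar > 0" using \<alpha>lo_pos by simp
    then show ?thesis using a0 \<alpha>_lower[of x] by linarith
  qed
  have a_nn: "\<And>k. 0 \<le> a k" unfolding a_def by (rule Psi_nonneg)
  have asum: "summable a"
  proof -
    obtain \<pi> where \<pi>: "\<forall>j. \<pi> j \<in> U" "(\<lambda>k. setdist N (traj f x \<pi> k) A) \<longlonglongrightarrow> 0"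
      using xD unfolding domA_def by blast
    have "eventually (\<lambda>k. setdist N (traj f x \<pi> k) A < r) sequentially"
      using order_tendstoD(2)[OF \<pi>(2) r_pos] .
    then obtain K where K: "setdist N (traj f x \<pi> K) A < r" by (auto simp: eventually_sequentially)
    define z where "z = traj f x \<pi> K"
    define d where "d = setdist N z A"
    have d: "d \<in> {0..r}" using K setdist_nonneg[OF norm A_ne, of z] unfolding d_def z_def by auto
    obtain \<pi>2 where \<pi>2: "\<forall>j. \<pi>2 j \<in> U" "\<forall>k. setdist N (traj f z \<pi>2 k) A \<le> M * lam d k"
      using stab[of z] K unfolding d_def z_def by auto
    define \<pi>' where "\<pi>' = (\<lambda>j. if j < K then \<pi> j else \<pi>2 (j - K))"
    have \<pi>'U: "\<forall>j. \<pi>' j \<in> U" using \<pi>(1) \<pi>2(1) unfolding \<pi>'_def by auto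
    have bnd: "a (k + K) \<le> \<alpha>hi * M powr pbar * lam r k powr pbar" for k
    proof -
      have tr: "traj f x \<pi>' (K + k) = traj f z \<pi>2 k" unfolding \<pi>'_def z_def by (rule traj_append)
      have mem: "traj f x \<pi>' (K + k) \<in> reach f U {x} (k + K)"
        unfolding reach_def using \<pi>'U by (auto simp: add.commute)
      have "a (k + K) \<le> \<alpha> (traj f x \<pi>' (K + k))"
        unfolding a_def Psi_def by (rule cINF_lower[OF bdd_belowI2[where m=0] mem]) (rule \<alpha>_nonneg)
      also have "\<dots> \<le> \<alpha>hi * setdist N (traj f z \<pi>2 k) A powr pbar" using \<alpha>_upper tr by metis
      also have "\<dots> \<le> \<alpha>hi * (M * lam r k) powr pbar"
      proof -
        have "lam d k \<le> lam r k" using d r_pos by (intro mono_onD[OF lam_mono]) auto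
        moreover have "lam d k \<ge> 0" using lam_nonneg d by blast
        ultimately have "setdist N (traj f z \<pi>2 k) A \<le> M * lam r k"
          using \<pi>2(2) M_ge by (meson dual_order.trans mult_left_mono order.trans zero_le_one)
        then have "setdist N (traj f z \<pi>2 k) A powr pbar \<le> (M * lam r k) powr pbar"
          using setdist_nonneg[OF norm A_ne] pbar_ge p_pos by (intro powr_mono2) auto
        then show ?thesis using \<alpha>hi_pos by simp
      qed
      also have "\<dots> = \<alpha>hi * M powr pbar * lam r k powr pbar"
        using M_ge lam_nonneg[of r k] r_pos by (simp add: powr_mult)
      finally show ?thesis .
    qed
    have "(\<lambda>k. lam r k powr p) \<longlonglongrightarrow> 0" using summable_LIMSEQ_zero[OF lam_sum] .
    then have "eventually (\<lambda>k. lam r k powr p < 1) sequentially" using order_tendstoD(2) by fastforce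
    then have ev: "eventually (\<lambda>k. norm (a (k + K)) \<le> \<alpha>hi * M powr pbar * lam r k powr p) sequentially"
    proof (rule eventually_mono)
      fix k assume lt: "lam r k powr p < 1"
      have l0: "lam r k \<ge> 0" using lam_nonneg r_pos by simp
      have l1: "lam r k \<le> 1"
      proof (rule ccontr)
        assume "\<not> lam r k \<le> 1"
        then have "1 \<le> lam r k powr p" using p_pos by (intro ge_one_powr_ge_zero) auto
        then show False using lt by simp
      qed
      have "lam r k powr pbar \<le> lam r k powr p" using powr_mono'[OF pbar_ge l0 l1] .
      then have "\<alpha>hi * M powr pbar * lam r k powr pbar \<le> \<alpha>hi * M powr pbar * lam r k powr p"
        using \<alpha>hi_pos by (intro mult_left_mono) auto
      then show "norm (a (k + K)) \<le> \<alpha>hi * M powr pbar * lam r k powr p"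
        using bnd[of k] a_nn[of "k + K"] by simp
    qed
    have "summable (\<lambda>k. \<alpha>hi * M powr pbar * lam r k powr p)" by (rule summable_mult[OF lam_sum])
    then have "summable (\<lambda>k. a (k + K))" by (rule summable_comparison_test_ev[OF ev])
    then show ?thesis using summable_iff_shift by blast
  qed
  have V1: "Vfun \<alpha> f U {x} = ennreal (suminf a)"
  proof -
    have "Vfun \<alpha> f U {x} = (\<Sum>k. ennreal (a k))" unfolding Vfun_def a_def by simp
    also have "\<dots> = ennreal (suminf a)" by (rule suminf_ennreal2) (use asum a_nn in auto)
    finally show ?thesis .
  qed
  have asum2: "summable (\<lambda>k. a (Suc k))" using asum summable_iff_shift[of a 1] by simp
  have V2: "Vfun \<alpha> f U {f x us} = ennreal (\<Sum>k. a (Suc k))"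
  proof -
    have "Vfun \<alpha> f U {f x us} = (\<Sum>k. ennreal (a (Suc k)))" unfolding Vfun_def a_def shift by simp
    also have "\<dots> = ennreal (\<Sum>k. a (Suc k))" by (rule suminf_ennreal2) (use asum2 a_nn in auto)
    finally show ?thesis .
  qed
  have S2: "(\<Sum>k. a (Suc k)) = suminf a - a 0" by (rule suminf_split_head[OF asum])
  have S2nn: "(\<Sum>k. a (Suc k)) \<ge> 0" by (rule suminf_nonneg[OF asum2]) (simp add: a_def Psi_nonneg)
  have "(INF u\<in>U. Vfun \<alpha> f U {f x u}) \<le> Vfun \<alpha> f U {f x us}" by (rule INF_lower[OF us(1)])
  also have "\<dots> < Vfun \<alpha> f U {x}" unfolding V1 V2 S2 using apos S2nn S2
    by (intro ennreal_lessI) auto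
  finally have G1: "(INF u\<in>U. Vfun \<alpha> f U {f x u}) < Vfun \<alpha> f U {x}" .
  have Wnn: "Wfun \<alpha> f U X \<ge> 0" for X unfolding Wfun_def by auto
  have "(INF u\<in>U. Wfun \<alpha> f U {f x u}) \<le> Wfun \<alpha> f U {f x us}"
    by (rule cINF_lower[OF _ us(1)]) (rule bdd_belowI2[where m=0], rule Wnn)
  also have "\<dots> = 1 - exp (- (\<Sum>k. a (Suc k)))" unfolding Wfun_def V2 using S2nn by simp
  also have "\<dots> < 1 - exp (- suminf a)" using apos S2 by simp
  also have "\<dots> = Wfun \<alpha> f U {x}" unfolding Wfun_def V1 using S2nn S2 apos by simp
  finally show "(INF u\<in>U. Vfun \<alpha> f U {f x u}) < Vfun \<alpha> f U {x} \<and> (INF u\<in>U. Wfun \<alpha> f U {f x u}) < Wfun \<alpha> f U {x}"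
    using G1 by blast
qed

end
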